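(* Let $\phi=\tilde p/p$ be an irreducible rational inner function on $\mathbb{D}^3$ of degree $(m,n,1)$ with $p(z)=p_1(z_1,z_2)+z_3p_2(z_1,z_2)$, $\tilde p(z)=z_3\tilde p_1(z_1,z_2)+\tilde p_2(z_1,z_2)$, and for $\lambda\in\mathbb{T}$ let $q_\lambda=\lambda p_1-\tilde p_2$. Let $(\tau_1,\tau_2)\in\mathbb{T}^2$. Then: (A) if $(\tau_1,\tau_2,\tau_3)\in\mathcal{Z}_p$ for exactly one $\tau_3\in\mathbb{T}$, then for $\lambda\in\mathbb{T}$, $\phi^*(\tau)=\lambda$ if and only if $q_\lambda(\tau_1,\tau_2)=0$ (here $\tau=(\tau_1,\tau_2,\tau_3')$ with any $\tau_3'\in\mathbb{T}$); (B) if $\{(\tau_1,\tau_2)\}\times\mathbb{T}\subseteq\mathcal{Z}_p$, then $q_\lambda(\tau_1,\tau_2)=0$ for every $\lambda\in\mathbb{T}$.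
   Context: A rational inner function (RIF) on $\mathbb{D}^3$ is a rational function holomorphic on the tridisk with unimodular radial limits a.e. on $\mathbb{T}^3$; it is written $\phi=\tilde p/p$ with $p$ zero-free on $\mathbb{D}^3$, $p,\tilde p$ without common factors. For degree $(m,n,1)$, $\tilde p(z)=z_1^mz_2^nz_3\overline{p(1/\bar z_1,1/\bar z_2,1/\bar z_3)}$ and $\tilde p_j(z_1,z_2)=z_1^mz_2^n\overline{p_j(1/\bar z_1,1/\bar z_2)}$. $\phi^*(\tau)$ denotes the nontangential limit of $\phi$ at $\tau\in\mathbb{T}^3$ (limit as $z\to\tau$ in $\mathbb{D}^3$ with $\|z-\tau\|\le C(1-\|z\|)$), which exists for every RIF at every point of $\mathbb{T}^3$; under the hypothesis of (A) it does not depend on the third coordinate of $\tau$. $\mathcal{Z}_p$ is the zero set of $p$. *)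

theory Defs
  imports "HOL-Analysis.Analysis"
begin

type_synonym coeffs3 = "nat \<Rightarrow> nat \<Rightarrow> nat \<Rightarrow> complex"
type_synonym pt3 = "complex \<times> complex \<times> complex"

definition peval3 :: "nat \<Rightarrow> nat \<Rightarrow> nat \<Rightarrow> coeffs3 \<Rightarrow> pt3 \<Rightarrow> complex" where
  "peval3 m n k c z = (case z of (z1, z2, z3) \<Rightarrow>
     (\<Sum>i\<le>m. \<Sum>j\<le>n. \<Sum>l\<le>k. c i j l * z1 ^ i * z2 ^ j * z3 ^ l))"

definition peval2 :: "nat \<Rightarrow> nat \<Rightarrow> (nat \<Rightarrow> nat \<Rightarrow> complex) \<Rightarrow> complex \<Rightarrow> complex \<Rightarrow> complex" where
  "peval2 m n c z1 z2 = (\<Sum>i\<le>m. \<Sum>j\<le>n. c i j * z1 ^ i * z2 ^ j)"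

text \<open>Polynomial functions on C^3 (equality of polynomial functions = equality of polynomials).\<close>
definition is_poly3 :: "(pt3 \<Rightarrow> complex) \<Rightarrow> bool" where
  "is_poly3 f \<longleftrightarrow> (\<exists>N c. f = peval3 N N N c)"

definition poly3_const :: "(pt3 \<Rightarrow> complex) \<Rightarrow> bool" where
  "poly3_const f \<longleftrightarrow> (\<exists>a. \<forall>z. f z = a)"

definition poly3_irreducible :: "(pt3 \<Rightarrow> complex) \<Rightarrow> bool" where
  "poly3_irreducible p \<longleftrightarrow> is_poly3 p \<and> \<not> poly3_const p \<and>
     (\<forall>f g. is_poly3 f \<and> is_poly3 g \<and> p = (\<lambda>z. f z * g z) \<longrightarrow> poly3_const f \<or> poly3_const g)"

definition poly3_no_common_factor :: "(pt3 \<Rightarrow> complex) \<Rightarrow> (pt3 \<Rightarrow> complex) \<Rightarrow> bool" where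
  "poly3_no_common_factor p q \<longleftrightarrow>
     \<not> (\<exists>h f g. is_poly3 h \<and> \<not> poly3_const h \<and> is_poly3 f \<and> is_poly3 g \<and>
            p = (\<lambda>z. h z * f z) \<and> q = (\<lambda>z. h z * g z))"

definition exact_degree3 :: "nat \<Rightarrow> nat \<Rightarrow> nat \<Rightarrow> coeffs3 \<Rightarrow> bool" where
  "exact_degree3 m n k c \<longleftrightarrow>
     (\<exists>j\<le>n. \<exists>l\<le>k. c m j l \<noteq> 0) \<and> (\<exists>i\<le>m. \<exists>l\<le>k. c i n l \<noteq> 0) \<and>
     (\<exists>i\<le>m. \<exists>j\<le>n. c i j k \<noteq> 0)"

text \<open>Reflection: coefficients of z^(m,n,k) * conj(p(1/conj z)).\<close>
definition refl3 :: "nat \<Rightarrow> nat \<Rightarrow> nat \<Rightarrow> coeffs3 \<Rightarrow> coeffs3" where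
  "refl3 m n k c = (\<lambda>i j l. cnj (c (m - i) (n - j) (k - l)))"

definition tridisk :: "pt3 set" where
  "tridisk = {(z1, z2, z3). cmod z1 < 1 \<and> cmod z2 < 1 \<and> cmod z3 < 1}"

definition maxnorm3 :: "pt3 \<Rightarrow> real" where
  "maxnorm3 z = (case z of (a, b, c) \<Rightarrow> max (cmod a) (max (cmod b) (cmod c)))"

definition nt_region :: "pt3 \<Rightarrow> real \<Rightarrow> pt3 set" where
  "nt_region \<tau> C = {z \<in> tridisk. maxnorm3 (z - \<tau>) \<le> C * (1 - maxnorm3 z)}"

definition has_nt_limit :: "(pt3 \<Rightarrow> complex) \<Rightarrow> pt3 \<Rightarrow> complex \<Rightarrow> bool" where
  "has_nt_limit f \<tau> L \<longleftrightarrow> (\<forall>C>0. (f \<longlongrightarrow> L) (at \<tau> within nt_region \<tau> C))"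

end

theory Submission
  imports Defs
begin

lemma sum_atMost_flip: "(\<Sum>i\<le>(m::nat). g (m - i)) = (\<Sum>i\<le>m. (g i :: complex))"
  by (rule sum.reindex_bij_witness[where i="\<lambda>i. m - i" and j="\<lambda>i. m - i"]) auto

lemma pow_unit_flip:
  fixes x :: complex assumes "cmod x = 1" "i \<le> m"
  shows "x ^ (m - i) = x ^ m * cnj x ^ i"
proof -
  have xc: "x * cnj x = 1" using assms(1) by (metis complex_norm_square mult.commute of_real_1 power_one)
  have "x ^ m = x ^ (m - i) * x ^ i" using assms(2) by (metis le_add_diff_inverse2 power_add)
  then have "x ^ m * cnj x ^ i = x ^ (m - i) * (x * cnj x) ^ i"
    by (simp add: power_mult_distrib mult.assoc)
  then show ?thesis using xc by simp
qed

lemma refl2: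
  fixes x y :: complex assumes "cmod x = 1" "cmod y = 1"
  shows "peval2 m n (\<lambda>i j. cnj (d (m - i) (n - j))) x y = x ^ m * y ^ n * cnj (peval2 m n d x y)"
proof -
  have "peval2 m n (\<lambda>i j. cnj (d (m - i) (n - j))) x y
     = (\<Sum>i\<le>m. \<Sum>j\<le>n. cnj (d (m - i) (n - j)) * x ^ i * y ^ j)" by (simp add: peval2_def)
  also have "\<dots> = (\<Sum>i\<le>m. \<Sum>j\<le>n. cnj (d i (n - j)) * x ^ (m - i) * y ^ j)"
  proof -
    have "(\<Sum>i\<le>m. \<Sum>j\<le>n. cnj (d (m - i) (n - j)) * x ^ i * y ^ j)
       = (\<Sum>i\<le>m. (\<lambda>i. \<Sum>j\<le>n. cnj (d i (n - j)) * x ^ (m - i) * y ^ j) (m - i))"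
      by (intro sum.cong refl) auto
    also have "\<dots> = (\<Sum>i\<le>m. (\<lambda>i. \<Sum>j\<le>n. cnj (d i (n - j)) * x ^ (m - i) * y ^ j) i)"
      by (rule sum_atMost_flip)
    finally show ?thesis by simp
  qed
  also have "\<dots> = (\<Sum>i\<le>m. \<Sum>j\<le>n. cnj (d i j) * x ^ (m - i) * y ^ (n - j))"
  proof (rule sum.cong[OF refl])
    fix i
    have "(\<Sum>j\<le>n. cnj (d i (n - j)) * x ^ (m - i) * y ^ j)
        = (\<Sum>j\<le>n. (\<lambda>j. cnj (d i j) * x ^ (m - i) * y ^ (n - j)) (n - j))"
      by (intro sum.cong refl) auto
    also have "\<dots> = (\<Sum>j\<le>n. (\<lambda>j. cnj (d i j) * x ^ (m - i) * y ^ (n - j)) j)"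
      by (rule sum_atMost_flip)
    finally show "(\<Sum>j\<le>n. cnj (d i (n - j)) * x ^ (m - i) * y ^ j) = (\<Sum>j\<le>n. cnj (d i j) * x ^ (m - i) * y ^ (n - j))" by simp
  qed
  also have "\<dots> = (\<Sum>i\<le>m. \<Sum>j\<le>n. x ^ m * y ^ n * (cnj (d i j) * cnj x ^ i * cnj y ^ j))"
  proof (intro sum.cong refl)
    fix i j assume "i \<in> {..m}" "j \<in> {..n}"
    then have "x ^ (m - i) = x ^ m * cnj x ^ i" "y ^ (n - j) = y ^ n * cnj y ^ j"
      using assms pow_unit_flip by auto
    then show "cnj (d i j) * x ^ (m - i) * y ^ (n - j) = x ^ m * y ^ n * (cnj (d i j) * cnj x ^ i * cnj y ^ j)"
      by (simp only:) (simp add: mult_ac)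
  qed
  also have "\<dots> = x ^ m * y ^ n * cnj (peval2 m n d x y)"
    by (simp add: peval2_def sum_distrib_left)
  finally show ?thesis .
qed

lemma atMost_one_nat: "{..(1::nat)} = {0, 1}" by auto

lemma peval3_split:
  "peval3 m n 1 c (z1, z2, z3) = peval2 m n (\<lambda>i j. c i j 0) z1 z2 + z3 * peval2 m n (\<lambda>i j. c i j 1) z1 z2"
  unfolding peval3_def peval2_def
  by (simp add: atMost_one_nat sum.distrib sum_distrib_left mult_ac)

lemma peval3_refl_split:
  "peval3 m n 1 (refl3 m n 1 c) (z1, z2, z3) = z3 * peval2 m n (\<lambda>i j. cnj (c (m - i) (n - j) 0)) z1 z2 + peval2 m n (\<lambda>i j. cnj (c (m - i) (n - j) 1)) z1 z2"
  unfolding peval3_def peval2_def refl3_def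
  by (simp add: atMost_one_nat sum.distrib sum_distrib_left mult_ac add.commute)

definition dec2 :: "complex \<Rightarrow> complex \<Rightarrow> (complex \<Rightarrow> complex \<Rightarrow> complex) \<Rightarrow> bool" where
  "dec2 a b f \<longleftrightarrow> (\<exists>F G. isCont (\<lambda>w. F (fst w) (snd w)) (a, b) \<and> isCont (\<lambda>w. G (fst w) (snd w)) (a, b) \<and>
      (\<forall>x y. f x y = f a b + (x - a) * F x y + (y - b) * G x y))"

lemma dec2_isCont:
  assumes "dec2 a b f" shows "isCont (\<lambda>w. f (fst w) (snd w)) (a, b)"
proof -
  obtain F G where F: "isCont (\<lambda>w. F (fst w) (snd w)) (a, b)" and G: "isCont (\<lambda>w. G (fst w) (snd w)) (a, b)"
    and eq: "\<forall>x y. f x y = f a b + (x - a) * F x y + (y - b) * G x y"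
    using assms unfolding dec2_def by blast
  have "(\<lambda>w. f (fst w) (snd w)) = (\<lambda>w. f a b + (fst w - a) * F (fst w) (snd w) + (snd w - b) * G (fst w) (snd w))"
    by (rule ext) (use eq in blast)
  moreover have "isCont (\<lambda>w. f a b + (fst w - a) * F (fst w) (snd w) + (snd w - b) * G (fst w) (snd w)) (a, b)"
    by (intro isCont_add isCont_mult isCont_diff continuous_const isCont_fst isCont_snd continuous_ident F G)
  ultimately show ?thesis by simp
qed

lemma dec2_mult:
  assumes "dec2 a b f" "dec2 a b g" shows "dec2 a b (\<lambda>x y. f x y * g x y)"
proof -
  obtain F G where F: "isCont (\<lambda>w. F (fst w) (snd w)) (a, b)" and G: "isCont (\<lambda>w. G (fst w) (snd w)) (a, b)"
    and eq: "\<forall>x y. f x y = f a b + (x - a) * F x y + (y - b) * G x y"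
    using assms(1) unfolding dec2_def by blast
  obtain F' G' where F': "isCont (\<lambda>w. F' (fst w) (snd w)) (a, b)" and G': "isCont (\<lambda>w. G' (fst w) (snd w)) (a, b)"
    and eq': "\<forall>x y. g x y = g a b + (x - a) * F' x y + (y - b) * G' x y"
    using assms(2) unfolding dec2_def by blast
  have gc: "isCont (\<lambda>w. g (fst w) (snd w)) (a, b)" using dec2_isCont[OF assms(2)] .
  show ?thesis unfolding dec2_def
  proof (intro exI conjI allI)
    show "isCont (\<lambda>w. F (fst w) (snd w) * g (fst w) (snd w) + f a b * F' (fst w) (snd w)) (a, b)"
      by (intro isCont_add isCont_mult isCont_diff continuous_const isCont_fst isCont_snd continuous_ident F F' gc)
    show "isCont (\<lambda>w. G (fst w) (snd w) * g (fst w) (snd w) + f a b * G' (fst w) (snd w)) (a, b)"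
      by (intro isCont_add isCont_mult isCont_diff continuous_const isCont_fst isCont_snd continuous_ident G G' gc)
    fix x y
    have e1: "f x y = f a b + (x - a) * F x y + (y - b) * G x y" using eq by blast
    have e2: "g x y = g a b + (x - a) * F' x y + (y - b) * G' x y" using eq' by blast
    have "f x y * g x y = f a b * g x y + ((x - a) * F x y + (y - b) * G x y) * g x y"
      by (subst e1) (simp add: algebra_simps)
    also have "\<dots> = f a b * (g a b + (x - a) * F' x y + (y - b) * G' x y) + ((x - a) * F x y + (y - b) * G x y) * g x y"
      by (subst (1) e2) simp
    finally show "f x y * g x y = f a b * g a b + (x - a) * (F x y * g x y + f a b * F' x y) + (y - b) * (G x y * g x y + f a b * G' x y)"
      by (simp add: algebra_simps)
  qed
qed

lemma dec2_diff:
  assumes "dec2 a b f" "dec2 a b g" shows "dec2 a b (\<lambda>x y. f x y - g x y)"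
proof -
  obtain F G where F: "isCont (\<lambda>w. F (fst w) (snd w)) (a, b)" and G: "isCont (\<lambda>w. G (fst w) (snd w)) (a, b)"
    and eq: "\<forall>x y. f x y = f a b + (x - a) * F x y + (y - b) * G x y"
    using assms(1) unfolding dec2_def by blast
  obtain F' G' where F': "isCont (\<lambda>w. F' (fst w) (snd w)) (a, b)" and G': "isCont (\<lambda>w. G' (fst w) (snd w)) (a, b)"
    and eq': "\<forall>x y. g x y = g a b + (x - a) * F' x y + (y - b) * G' x y"
    using assms(2) unfolding dec2_def by blast
  show ?thesis unfolding dec2_def
  proof (intro exI conjI allI)
    show "isCont (\<lambda>w. F (fst w) (snd w) - F' (fst w) (snd w)) (a, b)"
      by (intro isCont_add isCont_mult isCont_diff continuous_const isCont_fst isCont_snd continuous_ident F F')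
    show "isCont (\<lambda>w. G (fst w) (snd w) - G' (fst w) (snd w)) (a, b)"
      by (intro isCont_add isCont_mult isCont_diff continuous_const isCont_fst isCont_snd continuous_ident G G')
    fix x y
    show "f x y - g x y = f a b - g a b + (x - a) * (F x y - F' x y) + (y - b) * (G x y - G' x y)"
    proof -
      have e1: "f x y = f a b + (x - a) * F x y + (y - b) * G x y" using eq by blast
      have e2: "g x y = g a b + (x - a) * F' x y + (y - b) * G' x y" using eq' by blast
      show ?thesis by (subst e1, subst e2) (simp add: algebra_simps)
    qed
  qed
qed

lemma pow_dec: "(x::complex) ^ i = a ^ i + (x - a) * (\<Sum>k<i. a ^ (i - Suc k) * x ^ k)"
  using power_diff_sumr2[of x i a] by (simp add: algebra_simps)

lemma dec2_peval2: "dec2 a b (peval2 m n d)"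
  unfolding dec2_def
proof (intro exI conjI allI)
  let ?F = "\<lambda>x y. \<Sum>i\<le>m. \<Sum>j\<le>n. d i j * (\<Sum>k<i. a ^ (i - Suc k) * x ^ k) * y ^ j"
  let ?G = "\<lambda>x y. \<Sum>i\<le>m. \<Sum>j\<le>n. d i j * a ^ i * (\<Sum>k<j. b ^ (j - Suc k) * y ^ k)"
  show "isCont (\<lambda>w. ?F (fst w) (snd w)) (a, b)" by (intro continuous_intros)
  show "isCont (\<lambda>w. ?G (fst w) (snd w)) (a, b)" by (intro continuous_intros)
  fix x y
  have mono: "d i j * x ^ i * y ^ j = d i j * a ^ i * b ^ j + (x - a) * (d i j * (\<Sum>k<i. a ^ (i - Suc k) * x ^ k) * y ^ j)
      + (y - b) * (d i j * a ^ i * (\<Sum>k<j. b ^ (j - Suc k) * y ^ k))" for i j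
  proof -
    define Qx where "Qx = (\<Sum>k<i. a ^ (i - Suc k) * x ^ k)"
    define Qy where "Qy = (\<Sum>k<j. b ^ (j - Suc k) * y ^ k)"
    have hx: "x ^ i = a ^ i + (x - a) * Qx" unfolding Qx_def by (rule pow_dec)
    have hy: "y ^ j = b ^ j + (y - b) * Qy" unfolding Qy_def by (rule pow_dec)
    have "d i j * x ^ i * y ^ j = d i j * a ^ i * b ^ j + (x - a) * (d i j * Qx * (b ^ j + (y - b) * Qy))
      + (y - b) * (d i j * a ^ i * Qy)"
      by (simp only: hx hy) (simp add: algebra_simps)
    then have "d i j * x ^ i * y ^ j = d i j * a ^ i * b ^ j + (x - a) * (d i j * Qx * y ^ j)
      + (y - b) * (d i j * a ^ i * Qy)" by (simp only: hy[symmetric])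
    then show ?thesis unfolding Qx_def Qy_def .
  qed
  show "peval2 m n d x y = peval2 m n d a b + (x - a) * ?F x y + (y - b) * ?G x y"
  proof -
    have "peval2 m n d x y = (\<Sum>i\<le>m. \<Sum>j\<le>n. d i j * a ^ i * b ^ j + (x - a) * (d i j * (\<Sum>k<i. a ^ (i - Suc k) * x ^ k) * y ^ j)
      + (y - b) * (d i j * a ^ i * (\<Sum>k<j. b ^ (j - Suc k) * y ^ k)))"
      unfolding peval2_def by (intro sum.cong refl) (rule mono)
    then show ?thesis unfolding peval2_def by (simp only: sum.distrib sum_distrib_left)
  qed
qed

lemma circle_deriv_zero:
  fixes F :: "complex \<Rightarrow> complex" and h :: "complex \<Rightarrow> real" and a b :: complex
  assumes a: "cmod a = 1" and Fc: "isCont F a" and b: "b \<noteq> 0"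
    and eq: "\<And>x. cmod x = 1 \<Longrightarrow> (x - a) * F x = x ^ k * b * complex_of_real (h x)"
    and hpos: "\<And>x. cmod x = 1 \<Longrightarrow> h x \<ge> 0"
  shows "F a = 0"
proof -
  define X where "X t = a * (1 + \<i> * of_real t) / (1 - \<i> * of_real t)" for t :: real
  have den: "1 - \<i> * of_real t \<noteq> 0" for t :: real
  proof
    assume "1 - \<i> * of_real t = 0"
    then have "Re (1 - \<i> * of_real t) = 0" by simp
    then show False by simp
  qed
  have a0: "a \<noteq> 0" using a by auto
  have nn: "cmod (1 + \<i> * of_real t) = cmod (1 - \<i> * of_real t)" for t :: real
    by (simp add: cmod_def)
  have Xn: "cmod (X t) = 1" for t
    unfolding X_def using a den[of t] nn[of t] by (simp add: norm_divide norm_mult)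
  have X0: "X t \<noteq> 0" for t using Xn[of t] by auto
  have Xa: "X t - a = a * (2 * \<i> * of_real t) / (1 - \<i> * of_real t)" for t
    unfolding X_def using den[of t] by (simp add: field_simps)
  define G where "G t = F (X t) * (2 * \<i> * a) / ((1 - \<i> * of_real t) * X t ^ k * b)" for t :: real
  define L where "L = F a * (2 * \<i> * a) / (a ^ k * b)"
  have XL: "(X \<longlongrightarrow> a) (at 0)"
  proof -
    have "((\<lambda>t. a * (1 + \<i> * of_real t) / (1 - \<i> * of_real t)) \<longlongrightarrow> a * (1 + \<i> * of_real 0) / (1 - \<i> * of_real 0)) (at (0::real))"
      by (intro tendsto_intros) auto
    then show ?thesis unfolding X_def by simp
  qed
  have FL: "((\<lambda>t. F (X t)) \<longlongrightarrow> F a) (at 0)" by (rule isCont_tendsto_compose[OF Fc XL])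
  have GL0: "(G \<longlongrightarrow> F a * (2 * \<i> * a) / ((1 - \<i> * of_real 0) * a ^ k * b)) (at 0)"
    unfolding G_def using a0 b by (intro tendsto_intros FL XL) auto
  have GL: "(G \<longlongrightarrow> L) (at 0)" using GL0 by (simp add: L_def)
  have Greal: "G t = of_real (h (X t) / t)" if "t \<noteq> 0" for t
  proof -
    have "G t * of_real t = (X t - a) * F (X t) / (X t ^ k * b)"
      unfolding G_def Xa using den[of t] X0[of t] b by (simp add: field_simps)
    also have "\<dots> = of_real (h (X t))" using eq[OF Xn[of t]] X0[of t] b by (simp add: field_simps)
    finally show ?thesis using that by (simp add: field_simps)
  qed
  have GLr: "(G \<longlongrightarrow> L) (at_right 0)" by (rule tendsto_mono[OF at_le[OF subset_UNIV] GL])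
  have GLl: "(G \<longlongrightarrow> L) (at_left 0)" by (rule tendsto_mono[OF at_le[OF subset_UNIV] GL])
  have ReR: "0 \<le> Re L"
  proof (rule tendsto_lowerbound[OF tendsto_Re[OF GLr]])
    show "\<forall>\<^sub>F t in at_right 0. 0 \<le> Re (G t)"
      using eventually_at_right_less[of "0::real"]
      by eventually_elim (simp add: Greal hpos Xn)
  qed simp
  have ReL: "Re L \<le> 0"
  proof (rule tendsto_upperbound[OF tendsto_Re[OF GLl]])
    show "\<forall>\<^sub>F t in at_left 0. 0 \<ge> Re (G t)"
      using eventually_at_left_real[of "-1" 0, OF neg_less_0_iff_less[THEN iffD2, OF zero_less_one]]
      by eventually_elim (auto simp: Greal hpos Xn divide_nonneg_neg)
  qed simp
  have ImR: "0 \<le> Im L"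
  proof (rule tendsto_lowerbound[OF tendsto_Im[OF GLr]])
    show "\<forall>\<^sub>F t in at_right 0. 0 \<le> Im (G t)"
      using eventually_at_right_less[of "0::real"]
      by eventually_elim (simp add: Greal)
  qed simp
  have ImL: "Im L \<le> 0"
  proof (rule tendsto_upperbound[OF tendsto_Im[OF GLr]])
    show "\<forall>\<^sub>F t in at_right 0. 0 \<ge> Im (G t)"
      using eventually_at_right_less[of "0::real"]
      by eventually_elim (simp add: Greal)
  qed simp
  have "L = 0" using ReR ReL ImR ImL by (simp add: complex_eq_iff)
  then show ?thesis using a0 b unfolding L_def by simp
qed

lemma pt_bound:
  fixes p1 p2 q1 q2 f g K z1 z2 z3 a1 a2 :: complex and C :: real
  assumes zf: "\<And>w. cmod w < 1 \<Longrightarrow> p1 + w * p2 \<noteq> 0" and z3: "cmod z3 < 1" and p2nz: "p2 \<noteq> 0"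
    and decD: "q1 * p1 - q2 * p2 = (z1 - a1) * f + (z2 - a2) * g"
    and d1: "cmod (z1 - a1) \<le> C * (1 - cmod z3)" and d2: "cmod (z2 - a2) \<le> C * (1 - cmod z3)"
  shows "cmod ((z3 * q1 + q2) / (p1 + z3 * p2) - K) \<le> cmod (q1 - K * p2) / cmod p2 + C * (cmod f + cmod g) / (cmod p2)^2"
proof -
  define w where "w = - p1 / p2"
  have w1: "1 \<le> cmod w"
  proof (rule ccontr)
    assume "\<not> 1 \<le> cmod w"
    then have "p1 + w * p2 \<noteq> 0" using zf by simp
    then show False using p2nz unfolding w_def by (simp add: field_simps)
  qed
  define P where "P = p1 + z3 * p2"
  have Pw: "P = p2 * (z3 - w)" unfolding P_def w_def using p2nz by (simp add: field_simps)
  have e: "0 < 1 - cmod z3" using z3 by simp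
  have "1 - cmod z3 \<le> cmod w - cmod z3" using w1 by simp
  also have "\<dots> \<le> cmod (z3 - w)" by (metis norm_minus_commute norm_triangle_ineq2)
  finally have zw: "1 - cmod z3 \<le> cmod (z3 - w)" .
  have Pb: "cmod p2 * (1 - cmod z3) \<le> cmod P" unfolding Pw norm_mult
    using zw by (intro mult_left_mono) auto
  have Ppos: "0 < cmod P" using Pb e p2nz by (smt (verit) mult_pos_pos zero_less_norm_iff)
  then have P0: "P \<noteq> 0" by auto
  have ident: "(z3 * q1 + q2) / P - K = (q1 - K * p2) / p2 - (q1 * p1 - q2 * p2) / (p2 * P)"
  proof -
    have num: "(q1 - K * p2) * P - (q1 * p1 - q2 * p2) = p2 * (z3 * q1 + q2 - K * P)"
      unfolding P_def by (simp add: algebra_simps)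
    have "(q1 - K * p2) / p2 - (q1 * p1 - q2 * p2) / (p2 * P) = ((q1 - K * p2) * P - (q1 * p1 - q2 * p2)) / (p2 * P)"
      using p2nz P0 by (simp add: field_simps)
    also have "\<dots> = (z3 * q1 + q2 - K * P) / P" unfolding num using p2nz P0 by simp
    also have "\<dots> = (z3 * q1 + q2) / P - K" using P0 by (simp add: field_simps)
    finally show ?thesis by simp
  qed
  have Db: "cmod (q1 * p1 - q2 * p2) \<le> C * (1 - cmod z3) * (cmod f + cmod g)"
  proof -
    have "cmod (q1 * p1 - q2 * p2) \<le> cmod (z1 - a1) * cmod f + cmod (z2 - a2) * cmod g"
      unfolding decD by (metis norm_mult norm_triangle_ineq)
    also have "\<dots> \<le> C * (1 - cmod z3) * cmod f + C * (1 - cmod z3) * cmod g"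
      using d1 d2 by (intro add_mono mult_right_mono) auto
    finally show ?thesis by (simp add: algebra_simps)
  qed
  have "cmod ((q1 * p1 - q2 * p2) / (p2 * P)) = cmod (q1 * p1 - q2 * p2) / (cmod p2 * cmod P)"
    by (simp add: norm_divide norm_mult)
  also have "\<dots> \<le> C * (1 - cmod z3) * (cmod f + cmod g) / (cmod p2 * (cmod p2 * (1 - cmod z3)))"
    using Db Pb e p2nz order_trans[OF norm_ge_zero Db] by (intro frac_le mult_left_mono mult_pos_pos) auto
  also have "\<dots> = C * (cmod f + cmod g) / (cmod p2)^2"
    using e p2nz by (simp add: field_simps power2_eq_square)
  finally have T2: "cmod ((q1 * p1 - q2 * p2) / (p2 * P)) \<le> C * (cmod f + cmod g) / (cmod p2)^2" .
  have "cmod ((z3 * q1 + q2) / P - K) \<le> cmod ((q1 - K * p2) / p2) + cmod ((q1 * p1 - q2 * p2) / (p2 * P))"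
    unfolding ident by (rule norm_triangle_ineq4)
  also have "\<dots> \<le> cmod (q1 - K * p2) / cmod p2 + C * (cmod f + cmod g) / (cmod p2)^2"
    using T2 by (simp add: norm_divide)
  finally show ?thesis unfolding P_def .
qed

lemma boundary_ineq:
  fixes d1 d2 :: "nat \<Rightarrow> nat \<Rightarrow> complex" and x y :: complex
  assumes zf: "\<And>z1 z2 z3. cmod z1 < 1 \<Longrightarrow> cmod z2 < 1 \<Longrightarrow> cmod z3 < 1 \<Longrightarrow>
      peval2 m n d1 z1 z2 + z3 * peval2 m n d2 z1 z2 \<noteq> 0"
    and x: "cmod x = 1" and y: "cmod y = 1"
  shows "cmod (peval2 m n d2 x y) \<le> cmod (peval2 m n d1 x y)"
proof (rule ccontr)
  assume "\<not> ?thesis"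
  then have lt: "cmod (peval2 m n d1 x y) < cmod (peval2 m n d2 x y)" by simp
  then have g0: "peval2 m n d2 x y \<noteq> 0" by auto
  define f where "f r = peval2 m n d1 (of_real r * x) (of_real r * y)" for r :: real
  define g where "g r = peval2 m n d2 (of_real r * x) (of_real r * y)" for r :: real
  have fl: "(f \<longlongrightarrow> peval2 m n d1 x y) (at_left 1)"
  proof -
    have "isCont f 1" unfolding f_def peval2_def by (intro continuous_intros)
    then show ?thesis unfolding f_def isCont_def by (auto intro: tendsto_mono[OF at_le[OF subset_UNIV]])
  qed
  have gl: "(g \<longlongrightarrow> peval2 m n d2 x y) (at_left 1)"
  proof -
    have "isCont g 1" unfolding g_def peval2_def by (intro continuous_intros)
    then show ?thesis unfolding g_def isCont_def by (auto intro: tendsto_mono[OF at_le[OF subset_UNIV]])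
  qed
  have wl: "((\<lambda>r. - f r / g r) \<longlongrightarrow> - peval2 m n d1 x y / peval2 m n d2 x y) (at_left 1)"
    using fl gl g0 by (intro tendsto_intros)
  have "cmod (- peval2 m n d1 x y / peval2 m n d2 x y) < 1"
    using lt g0 by (simp add: norm_divide divide_less_eq)
  then have ev1: "eventually (\<lambda>r. cmod (- f r / g r) < 1) (at_left 1)"
    using order_tendstoD(2)[OF tendsto_norm[OF wl]] by blast
  have ev2: "eventually (\<lambda>r. g r \<noteq> 0) (at_left 1)"
    using tendsto_imp_eventually_ne[OF gl g0] .
  have ev3: "eventually (\<lambda>r. r \<in> {0<..<1}) (at_left (1::real))"
    by (rule eventually_at_left_real) simp
  have "eventually (\<lambda>r. cmod (- f r / g r) < 1 \<and> g r \<noteq> 0 \<and> r \<in> {0<..<1}) (at_left (1::real))"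
    using ev1 ev2 ev3 by eventually_elim auto
  then obtain r where r: "cmod (- f r / g r) < 1" "g r \<noteq> 0" "r \<in> {0<..<1}"
    using eventually_happens[of _ "at_left (1::real)"] by auto
  have "cmod (of_real r * x) < 1" "cmod (of_real r * y) < 1" using r(3) x y by (auto simp: norm_mult)
  from zf[OF this r(1)] have "f r + (- f r / g r) * g r \<noteq> 0" unfolding f_def g_def .
  then show False using r(2) by simp
qed

lemma nt_nontrivial:
  fixes a1 a2 s :: complex
  assumes a1: "cmod a1 = 1" and a2: "cmod a2 = 1" and s: "cmod s = 1"
  shows "\<not> trivial_limit (at (a1, a2, s) within nt_region (a1, a2, s) 1)"
  unfolding trivial_limit_within islimpt_approachable not_not
proof (intro allI impI)
  fix e :: real assume e: "0 < e"
  define r where "r = max (1/2) (1 - e / 6)"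
  have r0: "0 < r" "r < 1" "1 - r \<le> e / 6" using e unfolding r_def by (auto simp: max_def)
  define x where "x = (of_real r * a1, of_real r * a2, of_real r * s)"
  have n1: "cmod (of_real r * a1) = r" "cmod (of_real r * a2) = r" "cmod (of_real r * s) = r"
    using a1 a2 s r0 by (auto simp: norm_mult)
  have rr: "cmod (complex_of_real r - 1) = 1 - r"
  proof -
    have "complex_of_real r - 1 = complex_of_real (r - 1)" by simp
    then have "cmod (complex_of_real r - 1) = \<bar>r - 1\<bar>" by (simp only: norm_of_real)
    then show ?thesis using r0 by simp
  qed
  have d1: "cmod (of_real r * a1 - a1) = 1 - r" "cmod (of_real r * a2 - a2) = 1 - r" "cmod (of_real r * s - s) = 1 - r"
  proof -
    have "of_real r * a1 - a1 = of_real (r - 1) * a1" "of_real r * a2 - a2 = of_real (r - 1) * a2" "of_real r * s - s = of_real (r - 1) * s"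
      by (simp_all add: algebra_simps)
    then show "cmod (of_real r * a1 - a1) = 1 - r" "cmod (of_real r * a2 - a2) = 1 - r" "cmod (of_real r * s - s) = 1 - r"
      using a1 a2 s r0 rr by (simp_all add: norm_mult)
  qed
  have xin: "x \<in> nt_region (a1, a2, s) 1"
    unfolding nt_region_def tridisk_def maxnorm3_def x_def using n1 d1 r0 by simp
  have xne: "x \<noteq> (a1, a2, s)"
  proof
    assume "x = (a1, a2, s)"
    then have "cmod (of_real r * a1 - a1) = 0" unfolding x_def by simp
    then show False using d1 r0 by simp
  qed
  have "dist x (a1, a2, s) = norm (of_real r * a1 - a1, of_real r * a2 - a2, of_real r * s - s)"
    unfolding x_def dist_norm by simp
  also have "\<dots> \<le> cmod (of_real r * a1 - a1) + (cmod (of_real r * a2 - a2) + cmod (of_real r * s - s))"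
    by (meson add_left_mono norm_Pair_le order_trans)
  also have "\<dots> = 3 * (1 - r)" using d1 by simp
  also have "\<dots> < e" using r0 e by simp
  finally show "\<exists>x'\<in>nt_region (a1, a2, s) 1. x' \<noteq> (a1, a2, s) \<and> dist x' (a1, a2, s) < e"
    using xin xne by blast
qed

theorem lemma4p7:
  fixes c :: "nat \<Rightarrow> nat \<Rightarrow> nat \<Rightarrow> complex" and m n :: nat
    and \<tau>1 \<tau>2 :: complex
  defines "p \<equiv> peval3 m n 1 c"
    and "pt \<equiv> peval3 m n 1 (refl3 m n 1 c)"
    and "p1 \<equiv> peval2 m n (\<lambda>i j. c i j 0)"
    and "pt2 \<equiv> peval2 m n (\<lambda>i j. cnj (c (m - i) (n - j) 1))"
  assumes deg: "exact_degree3 m n 1 c"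
    and zero_free: "\<forall>z\<in>tridisk. p z \<noteq> 0"
    and coprime: "poly3_no_common_factor p pt"
    and irred: "poly3_irreducible p"
    and t1: "cmod \<tau>1 = 1" and t2: "cmod \<tau>2 = 1"
  shows "((\<exists>!t3. cmod t3 = 1 \<and> p (\<tau>1, \<tau>2, t3) = 0) \<longrightarrow>
            (\<forall>lam t3'. cmod lam = 1 \<and> cmod t3' = 1 \<longrightarrow>
               (has_nt_limit (\<lambda>z. pt z / p z) (\<tau>1, \<tau>2, t3') lam
                  \<longleftrightarrow> lam * p1 \<tau>1 \<tau>2 - pt2 \<tau>1 \<tau>2 = 0)))
       \<and> ((\<forall>t3. cmod t3 = 1 \<longrightarrow> p (\<tau>1, \<tau>2, t3) = 0) \<longrightarrow>
            (\<forall>lam. cmod lam = 1 \<longrightarrow> lam * p1 \<tau>1 \<tau>2 - pt2 \<tau>1 \<tau>2 = 0))"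
proof -
  define p2 where "p2 = peval2 m n (\<lambda>i j. c i j 1)"
  define pt1 where "pt1 = peval2 m n (\<lambda>i j. cnj (c (m - i) (n - j) 0))"
  have psplit: "p (z1, z2, z3) = p1 z1 z2 + z3 * p2 z1 z2" for z1 z2 z3
    unfolding p_def p1_def p2_def by (rule peval3_split)
  have ptsplit: "pt (z1, z2, z3) = z3 * pt1 z1 z2 + pt2 z1 z2" for z1 z2 z3
    unfolding pt_def pt1_def pt2_def by (rule peval3_refl_split)
  have r1: "pt1 x y = x ^ m * y ^ n * cnj (p1 x y)" if "cmod x = 1" "cmod y = 1" for x y
    unfolding pt1_def p1_def using refl2[OF that, of m n "\<lambda>i j. c i j 0"] by simp
  have r2: "pt2 x y = x ^ m * y ^ n * cnj (p2 x y)" if "cmod x = 1" "cmod y = 1" for x y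
    unfolding pt2_def p2_def using refl2[OF that, of m n "\<lambda>i j. c i j 1"] by simp
  have zf: "p1 z1 z2 + z3 * p2 z1 z2 \<noteq> 0" if "cmod z1 < 1" "cmod z2 < 1" "cmod z3 < 1" for z1 z2 z3
    using zero_free that psplit[of z1 z2 z3] unfolding tridisk_def by auto
  have bineq: "cmod (p2 x y) \<le> cmod (p1 x y)" if "cmod x = 1" "cmod y = 1" for x y
    unfolding p1_def p2_def by (rule boundary_ineq[OF zf[unfolded p1_def p2_def] that])
  have partB: "(\<forall>t3. cmod t3 = 1 \<longrightarrow> p (\<tau>1, \<tau>2, t3) = 0) \<longrightarrow>
            (\<forall>lam. cmod lam = 1 \<longrightarrow> lam * p1 \<tau>1 \<tau>2 - pt2 \<tau>1 \<tau>2 = 0)"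
  proof (intro impI allI)
    fix lam
    assume H: "\<forall>t3. cmod t3 = 1 \<longrightarrow> p (\<tau>1, \<tau>2, t3) = 0"
    have e1: "p1 \<tau>1 \<tau>2 + p2 \<tau>1 \<tau>2 = 0" using H[rule_format, of 1] psplit by simp
    have e2: "p1 \<tau>1 \<tau>2 - p2 \<tau>1 \<tau>2 = 0" using H[rule_format, of "-1"] psplit by simp
    have "2 * p2 \<tau>1 \<tau>2 = (p1 \<tau>1 \<tau>2 + p2 \<tau>1 \<tau>2) - (p1 \<tau>1 \<tau>2 - p2 \<tau>1 \<tau>2)" by (simp add: algebra_simps)
    then have "p2 \<tau>1 \<tau>2 = 0" using e1 e2 by simp
    then have "pt2 \<tau>1 \<tau>2 = 0" using r2[OF t1 t2] by simp
    moreover have "p1 \<tau>1 \<tau>2 = 0" using e1 \<open>p2 \<tau>1 \<tau>2 = 0\<close> by simp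
    ultimately show "lam * p1 \<tau>1 \<tau>2 - pt2 \<tau>1 \<tau>2 = 0" by simp
  qed
  have partA: "(\<exists>!t3. cmod t3 = 1 \<and> p (\<tau>1, \<tau>2, t3) = 0) \<longrightarrow>
            (\<forall>lam t3'. cmod lam = 1 \<and> cmod t3' = 1 \<longrightarrow>
               (has_nt_limit (\<lambda>z. pt z / p z) (\<tau>1, \<tau>2, t3') lam
                  \<longleftrightarrow> lam * p1 \<tau>1 \<tau>2 - pt2 \<tau>1 \<tau>2 = 0))"
  proof (intro impI allI)
    assume U: "\<exists>!t3. cmod t3 = 1 \<and> p (\<tau>1, \<tau>2, t3) = 0"
    then obtain t3 where t3: "cmod t3 = 1" "p (\<tau>1, \<tau>2, t3) = 0"
      and uq: "\<And>s. cmod s = 1 \<Longrightarrow> p (\<tau>1, \<tau>2, s) = 0 \<Longrightarrow> s = t3" by blast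
    have e0: "p1 \<tau>1 \<tau>2 + t3 * p2 \<tau>1 \<tau>2 = 0" using t3 psplit by simp
    have p2nz: "p2 \<tau>1 \<tau>2 \<noteq> 0"
    proof
      assume z: "p2 \<tau>1 \<tau>2 = 0"
      then have z1: "p1 \<tau>1 \<tau>2 = 0" using e0 by simp
      have "1 = t3" using uq[of 1] psplit z z1 by simp
      moreover have "-1 = t3" using uq[of "-1"] psplit z z1 by simp
      ultimately show False by simp
    qed
    have p1eq: "p1 \<tau>1 \<tau>2 = - (t3 * p2 \<tau>1 \<tau>2)" using e0 by (simp add: eq_neg_iff_add_eq_0)
    have nrm: "cmod (p1 \<tau>1 \<tau>2) = cmod (p2 \<tau>1 \<tau>2)" using p1eq t3 by (simp add: norm_mult)
    have p1nz: "p1 \<tau>1 \<tau>2 \<noteq> 0" using nrm p2nz by auto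
    define K where "K = pt2 \<tau>1 \<tau>2 / p1 \<tau>1 \<tau>2"
    define D where "D = (\<lambda>x y. pt1 x y * p1 x y - pt2 x y * p2 x y)"
    have DT: "D x y = x ^ m * y ^ n * complex_of_real ((cmod (p1 x y))^2 - (cmod (p2 x y))^2)"
      if "cmod x = 1" "cmod y = 1" for x y
    proof -
      have sq: "(complex_of_real (cmod z))^2 = z * cnj z" for z
        by (metis complex_norm_square of_real_power)
      show ?thesis unfolding D_def r1[OF that] r2[OF that] by (simp add: sq algebra_simps)
    qed
    have D0: "D \<tau>1 \<tau>2 = 0" using DT[OF t1 t2] nrm by simp
    have hpos: "0 \<le> (cmod (p1 x y))^2 - (cmod (p2 x y))^2" if "cmod x = 1" "cmod y = 1" for x y
      using power_mono[OF bineq[OF that] norm_ge_zero, of 2] by simp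
    have decD: "dec2 \<tau>1 \<tau>2 D"
      unfolding D_def pt1_def p1_def pt2_def p2_def by (intro dec2_diff dec2_mult dec2_peval2)
    then obtain F G where Fc: "isCont (\<lambda>w. F (fst w) (snd w)) (\<tau>1, \<tau>2)"
      and Gc: "isCont (\<lambda>w. G (fst w) (snd w)) (\<tau>1, \<tau>2)"
      and Deq: "\<And>x y. D x y = D \<tau>1 \<tau>2 + (x - \<tau>1) * F x y + (y - \<tau>2) * G x y"
      unfolding dec2_def by blast
    have c1: "isCont (\<lambda>x. F x \<tau>2) \<tau>1"
    proof -
      have "isCont (\<lambda>x. (x, \<tau>2)) \<tau>1" by (intro continuous_intros)
      from isCont_o2[OF this, of "\<lambda>w. F (fst w) (snd w)"] Fc show ?thesis by simp
    qed
    have c2: "isCont (\<lambda>y. G \<tau>1 y) \<tau>2"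
    proof -
      have "isCont (\<lambda>y. (\<tau>1, y)) \<tau>2" by (intro continuous_intros)
      from isCont_o2[OF this, of "\<lambda>w. G (fst w) (snd w)"] Gc show ?thesis by simp
    qed
    have eqF: "(x - \<tau>1) * F x \<tau>2 = x ^ m * \<tau>2 ^ n * complex_of_real ((cmod (p1 x \<tau>2))^2 - (cmod (p2 x \<tau>2))^2)"
      if "cmod x = 1" for x
      using Deq[of x \<tau>2] D0 DT[OF that t2] by simp
    have eqG: "(y - \<tau>2) * G \<tau>1 y = y ^ n * \<tau>1 ^ m * complex_of_real ((cmod (p1 \<tau>1 y))^2 - (cmod (p2 \<tau>1 y))^2)"
      if "cmod y = 1" for y
      using Deq[of \<tau>1 y] D0 DT[OF t1 that] by (simp add: mult_ac)
    have b1: "\<tau>2 ^ n \<noteq> 0" using t2 by auto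
    have b2: "\<tau>1 ^ m \<noteq> 0" using t1 by auto
    have F0: "F \<tau>1 \<tau>2 = 0"
      by (rule circle_deriv_zero[OF t1 c1 b1 eqF hpos[OF _ t2]])
    have G0: "G \<tau>1 \<tau>2 = 0"
      by (rule circle_deriv_zero[OF t2 c2 b2 eqG hpos[OF t1]])
    have A0: "pt1 \<tau>1 \<tau>2 - K * p2 \<tau>1 \<tau>2 = 0"
    proof -
      have "cnj (p2 \<tau>1 \<tau>2) * p2 \<tau>1 \<tau>2 = cnj (p1 \<tau>1 \<tau>2) * p1 \<tau>1 \<tau>2"
        using nrm by (metis complex_norm_square mult.commute)
      then show ?thesis unfolding K_def r1[OF t1 t2] r2[OF t1 t2] using p1nz
        by (simp add: field_simps)
    qed
    have p2c: "isCont (\<lambda>w. p2 (fst w) (snd w)) (\<tau>1, \<tau>2)"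
      unfolding p2_def by (rule dec2_isCont[OF dec2_peval2])
    have pt1c: "isCont (\<lambda>w. pt1 (fst w) (snd w)) (\<tau>1, \<tau>2)"
      unfolding pt1_def by (rule dec2_isCont[OF dec2_peval2])
    have lim: "has_nt_limit (\<lambda>z. pt z / p z) (\<tau>1, \<tau>2, s) K" for s
      unfolding has_nt_limit_def
    proof (intro allI impI)
      fix C :: real assume C: "0 < C"
      define S where "S = nt_region (\<tau>1, \<tau>2, s) C"
      define B where "B z = cmod (pt1 (fst z) (fst (snd z)) - K * p2 (fst z) (fst (snd z))) / cmod (p2 (fst z) (fst (snd z)))
         + C * (cmod (F (fst z) (fst (snd z))) + cmod (G (fst z) (fst (snd z)))) / (cmod (p2 (fst z) (fst (snd z))))^2" for z :: pt3
      have pr: "((\<lambda>z. (fst z, fst (snd z))) \<longlongrightarrow> (\<tau>1, \<tau>2)) (at (\<tau>1, \<tau>2, s) within S)"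
      proof -
        have "((\<lambda>z. (fst z, fst (snd z))) \<longlongrightarrow> (fst (\<tau>1, \<tau>2, s), fst (snd (\<tau>1, \<tau>2, s)))) (at (\<tau>1, \<tau>2, s) within S)"
          by (intro tendsto_intros)
        then show ?thesis by simp
      qed
      have cl: "((\<lambda>z. H (fst z) (fst (snd z))) \<longlongrightarrow> H \<tau>1 \<tau>2) (at (\<tau>1, \<tau>2, s) within S)"
        if "isCont (\<lambda>w. H (fst w) (snd w)) (\<tau>1, \<tau>2)" for H :: "complex \<Rightarrow> complex \<Rightarrow> complex"
        using isCont_tendsto_compose[OF that pr] by simp
      have BL0: "(B \<longlongrightarrow> cmod (pt1 \<tau>1 \<tau>2 - K * p2 \<tau>1 \<tau>2) / cmod (p2 \<tau>1 \<tau>2)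
         + C * (cmod (F \<tau>1 \<tau>2) + cmod (G \<tau>1 \<tau>2)) / (cmod (p2 \<tau>1 \<tau>2))^2) (at (\<tau>1, \<tau>2, s) within S)"
        unfolding B_def using p2nz
        by (intro tendsto_intros cl p2c pt1c Fc Gc) auto
      have BL: "(B \<longlongrightarrow> 0) (at (\<tau>1, \<tau>2, s) within S)"
        using BL0 A0 F0 G0 by simp
      have evS: "eventually (\<lambda>z. z \<in> S) (at (\<tau>1, \<tau>2, s) within S)"
        by (simp add: eventually_at_filter)
      have evp: "eventually (\<lambda>z. p2 (fst z) (fst (snd z)) \<noteq> 0) (at (\<tau>1, \<tau>2, s) within S)"
        by (rule tendsto_imp_eventually_ne[OF cl[OF p2c] p2nz])
      have ev: "eventually (\<lambda>z. norm (pt z / p z - K) \<le> B z) (at (\<tau>1, \<tau>2, s) within S)"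
        using evS evp
      proof eventually_elim
        case (elim z)
        obtain z1 z2 z3 where zz: "z = (z1, z2, z3)" by (cases z) auto
        from elim(1) have zt: "cmod z1 < 1" "cmod z2 < 1" "cmod z3 < 1"
          and zr: "maxnorm3 (z - (\<tau>1, \<tau>2, s)) \<le> C * (1 - maxnorm3 z)"
          unfolding S_def nt_region_def tridisk_def zz by auto
        have mz: "cmod z3 \<le> maxnorm3 z" unfolding zz maxnorm3_def by simp
        have m1: "cmod (z1 - \<tau>1) \<le> maxnorm3 (z - (\<tau>1, \<tau>2, s))" unfolding zz maxnorm3_def by simp
        have m2: "cmod (z2 - \<tau>2) \<le> maxnorm3 (z - (\<tau>1, \<tau>2, s))" unfolding zz maxnorm3_def by simp
        have cc: "C * (1 - maxnorm3 z) \<le> C * (1 - cmod z3)" using C mz by (intro mult_left_mono) auto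
        have d1: "cmod (z1 - \<tau>1) \<le> C * (1 - cmod z3)" using m1 zr cc by linarith
        have d2: "cmod (z2 - \<tau>2) \<le> C * (1 - cmod z3)" using m2 zr cc by linarith
        have dd: "pt1 z1 z2 * p1 z1 z2 - pt2 z1 z2 * p2 z1 z2 = (z1 - \<tau>1) * F z1 z2 + (z2 - \<tau>2) * G z1 z2"
          using Deq[of z1 z2] D0 unfolding D_def by simp
        have zfw: "p1 z1 z2 + w * p2 z1 z2 \<noteq> 0" if "cmod w < 1" for w
          using zf[OF zt(1) zt(2) that] .
        have p2z: "p2 z1 z2 \<noteq> 0" using elim(2) unfolding zz by simp
        have "cmod ((z3 * pt1 z1 z2 + pt2 z1 z2) / (p1 z1 z2 + z3 * p2 z1 z2) - K)
          \<le> cmod (pt1 z1 z2 - K * p2 z1 z2) / cmod (p2 z1 z2) + C * (cmod (F z1 z2) + cmod (G z1 z2)) / (cmod (p2 z1 z2))^2"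
          by (rule pt_bound[OF zfw zt(3) p2z dd d1 d2])
        then show ?case unfolding zz B_def psplit ptsplit by simp
      qed
      have "((\<lambda>z. pt z / p z - K) \<longlongrightarrow> 0) (at (\<tau>1, \<tau>2, s) within S)"
        by (rule Lim_null_comparison[OF ev BL])
      then show "((\<lambda>z. pt z / p z) \<longlongrightarrow> K) (at (\<tau>1, \<tau>2, s) within nt_region (\<tau>1, \<tau>2, s) C)"
        unfolding S_def by (simp add: Lim_null[symmetric])
    qed
    fix lam t3'
    assume lt: "cmod lam = 1 \<and> cmod t3' = 1"
    show "has_nt_limit (\<lambda>z. pt z / p z) (\<tau>1, \<tau>2, t3') lam \<longleftrightarrow> lam * p1 \<tau>1 \<tau>2 - pt2 \<tau>1 \<tau>2 = 0"
    proof
      assume h: "has_nt_limit (\<lambda>z. pt z / p z) (\<tau>1, \<tau>2, t3') lam"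
      have l1: "((\<lambda>z. pt z / p z) \<longlongrightarrow> lam) (at (\<tau>1, \<tau>2, t3') within nt_region (\<tau>1, \<tau>2, t3') 1)"
        using h unfolding has_nt_limit_def by simp
      have l2: "((\<lambda>z. pt z / p z) \<longlongrightarrow> K) (at (\<tau>1, \<tau>2, t3') within nt_region (\<tau>1, \<tau>2, t3') 1)"
        using lim[of t3'] unfolding has_nt_limit_def by simp
      have "lam = K" using tendsto_unique[OF nt_nontrivial[OF t1 t2 conjunct2[OF lt]] l1 l2] .
      then show "lam * p1 \<tau>1 \<tau>2 - pt2 \<tau>1 \<tau>2 = 0" unfolding K_def using p1nz by simp
    next
      assume "lam * p1 \<tau>1 \<tau>2 - pt2 \<tau>1 \<tau>2 = 0"
      then have "lam = K" unfolding K_def using p1nz by (simp add: field_simps)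
      then show "has_nt_limit (\<lambda>z. pt z / p z) (\<tau>1, \<tau>2, t3') lam" using lim by simp
    qed
  qed
  show ?thesis using partA partB by blast
qed

end
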